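(* Let $r\ge1$ and $f,g\in \mathrm{M}_r(\mathbb{C})[Z]$. Define $P_f(x,y_1)=\det(y_1I-f(xI))\in\mathbb{C}[x,y_1]$, $P_g(x,y_2)=\det(y_2I-g(xI))\in\mathbb{C}[x,y_2]$, and $$R_{f,g}(y_1,y_2)=\mathrm{Res}_x\left(P_f(x,y_1),P_g(x,y_2)\right),\qquad T_{f,g}(y_1,y_2)=\mathrm{Res}_x\left(P_f(x,y_1),\,y_2-\det(g(xI))\right),$$ both in $\mathbb{C}[y_1,y_2]$, where $\mathrm{Res}_x$ is the resultant with respect to $x$. (i) If every eigenvalue of $f(xI)$ and every eigenvalue of $g(xI)$ are multiplicatively independent functions in $\overline{\mathbb{C}(x)}$, then $R_{f,g}(y_1,y_2)$ has no factor of the form $y_1^iy_2^j-\rho$ or $y_1^i-\rho y_2^j$ with $i,j$ nonnegative integers not both zero and $\rho$ a root of unity. (ii) If every eigenvalue of $f(xI)$ and $\det(g(xI))$ are multiplicatively independent functions in $\overline{\mathbb{C}(x)}$, then $T_{f,g}(y_1,y_2)$ has no factor of the form $y_1^iy_2^j-\rho$ or $y_1^i-\rho y_2^j$ with $i,j$ nonnegative integers not both zero and $\rho$ a root of unity.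
   Context: A matrix polynomial $f\in\mathrm{M}_r(\mathbb{C})[Z]$ is $f(Z)=C_dZ^d+\cdots+C_0$ with $C_i\in\mathrm{M}_r(\mathbb{C})$, $C_d\ne0$, $d\ge1$; $f(xI)=\sum_iC_ix^i$ for a scalar variable $x$, $I$ the identity matrix. Eigenvalues of $f(xI)$ are taken in an algebraic closure $\overline{\mathbb{C}(x)}$ of $\mathbb{C}(x)$. Two functions $h_1,h_2\in\overline{\mathbb{C}(x)}$ are multiplicatively independent if there is no $(k_1,k_2)\in\mathbb{Z}^2\setminus\{(0,0)\}$ with $h_1^{k_1}h_2^{k_2}=1$. *)

theory Defs
  imports "Subresultants.Resultant_Prelim" "Jordan_Normal_Form.Char_Poly"
    "HOL-Computational_Algebra.Fraction_Field"
begin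

text \<open>A matrix polynomial f(Z) = C_d Z^d + ... + C_0 in M_r(C)[Z] is represented by the
  list of its coefficient matrices [C_0, ..., C_d].\<close>
definition matpoly :: "nat \<Rightarrow> complex mat list \<Rightarrow> bool" where
  "matpoly r Cs \<longleftrightarrow> length Cs \<ge> 2 \<and> set Cs \<subseteq> carrier_mat r r \<and> last Cs \<noteq> 0\<^sub>m r r"

definition eval_xI :: "nat \<Rightarrow> complex mat list \<Rightarrow> complex poly mat" where
  "eval_xI r Cs = mat r r (\<lambda>(i,j). \<Sum>k<length Cs. monom ((Cs ! k) $$ (i,j)) k)"

text \<open>Bivariate polynomials C[y1,y2] are represented as complex poly poly:
  outer variable y1, inner variable y2.\<close>
definition Y1 :: "complex poly poly" where "Y1 = [:0, 1:]"
definition Y2 :: "complex poly poly" where "Y2 = [:[:0, 1:]:]"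

text \<open>Embedding of C[x] into C[y1,y2][x] (constants in y1,y2).\<close>
definition lift_x :: "complex poly \<Rightarrow> complex poly poly poly" where
  "lift_x p = map_poly (\<lambda>c. [:[:c:]:]) p"

definition char_in :: "nat \<Rightarrow> complex poly poly \<Rightarrow> complex mat list \<Rightarrow> complex poly poly poly" where
  "char_in r y Cs = det ([:y:] \<cdot>\<^sub>m 1\<^sub>m r - map_mat lift_x (eval_xI r Cs))"

definition R_fg :: "nat \<Rightarrow> complex mat list \<Rightarrow> complex mat list \<Rightarrow> complex poly poly" where
  "R_fg r Fs Gs = resultant (char_in r Y1 Fs) (char_in r Y2 Gs)"

definition T_fg :: "nat \<Rightarrow> complex mat list \<Rightarrow> complex mat list \<Rightarrow> complex poly poly" where
  "T_fg r Fs Gs = resultant (char_in r Y1 Fs) ([:Y2:] - lift_x (det (eval_xI r Gs)))"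

definition root_of_unity :: "complex \<Rightarrow> bool" where
  "root_of_unity \<rho> \<longleftrightarrow> (\<exists>n::nat. n > 0 \<and> \<rho> ^ n = 1)"

definition no_special_factor :: "complex poly poly \<Rightarrow> bool" where
  "no_special_factor P \<longleftrightarrow>
     (\<forall>i j :: nat. \<forall>\<rho>. (i, j) \<noteq> (0, 0) \<and> root_of_unity \<rho> \<longrightarrow>
        \<not> (Y1 ^ i * Y2 ^ j - [:[:\<rho>:]:]) dvd P \<and>
        \<not> (Y1 ^ i - [:[:\<rho>:]:] * Y2 ^ j) dvd P)"

definition mult_indep :: "'a :: field \<Rightarrow> 'a \<Rightarrow> bool" where
  "mult_indep h1 h2 \<longleftrightarrow> \<not> (\<exists>k1 k2 :: int. (k1, k2) \<noteq> (0, 0) \<and> h1 powi k1 * h2 powi k2 = 1)"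

definition field_embedding :: "(complex poly fract \<Rightarrow> 'k :: field) \<Rightarrow> bool" where
  "field_embedding \<phi> \<longleftrightarrow> inj \<phi> \<and> \<phi> 1 = 1 \<and>
     (\<forall>a b. \<phi> (a + b) = \<phi> a + \<phi> b) \<and> (\<forall>a b. \<phi> (a * b) = \<phi> a * \<phi> b)"

text \<open>f(xI) viewed as a matrix over 'k, an algebraically closed field containing C(x).\<close>
definition xI_in :: "(complex poly fract \<Rightarrow> 'k :: field) \<Rightarrow> nat \<Rightarrow> complex mat list \<Rightarrow> 'k mat" where
  "xI_in \<phi> r Cs = map_mat (\<lambda>p. \<phi> (to_fract p)) (eval_xI r Cs)"

end

theory Submission
  imports Defs "Subresultants.Subresultant_Gcd" "HOL-Computational_Algebra.Field_as_Ring"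
begin

definition mpoly :: "nat \<Rightarrow> 'a::comm_ring_1 poly \<Rightarrow> 'a mat \<Rightarrow> 'a mat" where
  "mpoly n p A = foldr (\<lambda>c M. c \<cdot>\<^sub>m 1\<^sub>m n + A * M) (coeffs p) (0\<^sub>m n n)"

lemma mpoly_list_carrier:
  assumes "A \<in> carrier_mat n n"
  shows "foldr (\<lambda>c M. c \<cdot>\<^sub>m 1\<^sub>m n + A * M) xs (0\<^sub>m n n) \<in> carrier_mat n n"
  using assms by (induct xs) auto

lemma mpoly_carrier[simp]: "A \<in> carrier_mat n n \<Longrightarrow> mpoly n p A \<in> carrier_mat n n"
  unfolding mpoly_def by (rule mpoly_list_carrier)

lemma mpoly_dims[simp]: "A \<in> carrier_mat n n \<Longrightarrow> dim_row (mpoly n p A) = n"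
  "A \<in> carrier_mat n n \<Longrightarrow> dim_col (mpoly n p A) = n"
  using mpoly_carrier by blast+

lemma mpoly_0[simp]: "mpoly n 0 A = 0\<^sub>m n n"
  unfolding mpoly_def by simp

lemma mpoly_pCons:
  assumes A: "A \<in> carrier_mat n n"
  shows "mpoly n (pCons a p) A = a \<cdot>\<^sub>m 1\<^sub>m n + A * mpoly n p A"
proof (cases "a = 0 \<and> p = 0")
  case True
  then show ?thesis using A by auto
next
  case False
  then have "coeffs (pCons a p) = a # coeffs p" by auto
  then show ?thesis unfolding mpoly_def by simp
qed

lemma mpoly_add:
  assumes A: "A \<in> carrier_mat n n"
  shows "mpoly n (p + q) A = mpoly n p A + mpoly n q A"
proof (induct p q rule: poly_induct2)
  case 0
  show ?case using A by simp
next
  case (pCons a p b q)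
  have c1: "mpoly n p A \<in> carrier_mat n n" "mpoly n q A \<in> carrier_mat n n" using A by auto
  have "mpoly n (pCons a p + pCons b q) A = mpoly n (pCons (a+b) (p+q)) A" by simp
  also have "\<dots> = (a+b) \<cdot>\<^sub>m 1\<^sub>m n + A * (mpoly n p A + mpoly n q A)"
    unfolding mpoly_pCons[OF A] pCons ..
  also have "A * (mpoly n p A + mpoly n q A) = A * mpoly n p A + A * mpoly n q A"
    by (rule mult_add_distrib_mat[OF A c1])
  also have "(a+b) \<cdot>\<^sub>m 1\<^sub>m n + (A * mpoly n p A + A * mpoly n q A) = (a \<cdot>\<^sub>m 1\<^sub>m n + A * mpoly n p A) + (b \<cdot>\<^sub>m 1\<^sub>m n + A * mpoly n q A)"
    by (rule eq_matI, insert A c1, auto simp: algebra_simps)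
  finally show ?case unfolding mpoly_pCons[OF A] .
qed

lemma mpoly_smult:
  assumes A: "A \<in> carrier_mat n n"
  shows "mpoly n (smult c p) A = c \<cdot>\<^sub>m mpoly n p A"
proof (induct p)
  case 0
  then show ?case by simp
next
  case (pCons a p)
  have c1: "mpoly n p A \<in> carrier_mat n n" using A by auto
  have "mpoly n (smult c (pCons a p)) A = (c*a) \<cdot>\<^sub>m 1\<^sub>m n + A * (c \<cdot>\<^sub>m mpoly n p A)"
    by (simp add: mpoly_pCons[OF A] pCons(2))
  also have "\<dots> = (c*a) \<cdot>\<^sub>m 1\<^sub>m n + c \<cdot>\<^sub>m (A * mpoly n p A)"
    using mult_smult_distrib[OF A c1] by simp
  also have "(c*a) \<cdot>\<^sub>m 1\<^sub>m n = c \<cdot>\<^sub>m (a \<cdot>\<^sub>m 1\<^sub>m n)"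
    by (rule eq_matI, auto)
  also have "c \<cdot>\<^sub>m (a \<cdot>\<^sub>m 1\<^sub>m n) + c \<cdot>\<^sub>m (A * mpoly n p A) = c \<cdot>\<^sub>m (a \<cdot>\<^sub>m 1\<^sub>m n + A * mpoly n p A)"
    by (rule add_smult_distrib_left_mat[symmetric], insert A c1, auto)
  finally show ?case unfolding mpoly_pCons[OF A] .
qed

lemma mpoly_const: assumes A: "A \<in> carrier_mat n n"
  shows "mpoly n [:a:] A = a \<cdot>\<^sub>m 1\<^sub>m n"
  using mpoly_pCons[OF A, of a 0] A by simp

lemma mpoly_pCons0: assumes A: "A \<in> carrier_mat n n"
  shows "mpoly n (pCons 0 p) A = A * mpoly n p A"
proof -
  have "mpoly n (pCons 0 p) A = 0 \<cdot>\<^sub>m 1\<^sub>m n + A * mpoly n p A" by (rule mpoly_pCons[OF A])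
  also have "\<dots> = A * mpoly n p A" by (rule eq_matI, insert A, auto)
  finally show ?thesis .
qed

lemma mpoly_lin: assumes A: "A \<in> carrier_mat n n"
  shows "mpoly n ([:-c,1:] * q) A = char_matrix A c * mpoly n q A"
proof -
  have c1: "mpoly n q A \<in> carrier_mat n n" using A by auto
  have e: "[:-c,1:] * q = smult (-c) q + pCons 0 q" by simp
  have "mpoly n ([:-c,1:] * q) A = (-c) \<cdot>\<^sub>m mpoly n q A + A * mpoly n q A"
    unfolding e mpoly_add[OF A] mpoly_smult[OF A] mpoly_pCons0[OF A] ..
  also have "\<dots> = A * mpoly n q A + ((-c) \<cdot>\<^sub>m (1\<^sub>m n)) * mpoly n q A"
    using mult_smult_assoc_mat[of "1\<^sub>m n" n n "mpoly n q A" n "-c"] c1 A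
    by (subst comm_add_mat[of _ n n], auto)
  also have "\<dots> = (A + ((-c) \<cdot>\<^sub>m (1\<^sub>m n))) * mpoly n q A"
    by (rule add_mult_distrib_mat[symmetric], insert A c1, auto)
  finally show ?thesis unfolding char_matrix_def using A by simp
qed

lemma pow_mat_comm: assumes A: "A \<in> carrier_mat n n"
  shows "A * A ^\<^sub>m k = A ^\<^sub>m k * A"
proof (induct k)
  case 0
  then show ?case using A by simp
next
  case (Suc k)
  have "A * A ^\<^sub>m Suc k = (A * A ^\<^sub>m k) * A" using A by (simp add: assoc_mult_mat[of _ n n _ n _ n])
  also have "\<dots> = A ^\<^sub>m Suc k * A" using Suc by simp
  finally show ?case .
qed

lemma mpoly_monom: assumes A: "A \<in> carrier_mat n n"
  shows "mpoly n (monom 1 k) A = A ^\<^sub>m k"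
proof (induct k)
  case 0
  have "mpoly n (monom 1 0) A = 1 \<cdot>\<^sub>m 1\<^sub>m n" using mpoly_const[OF A, of 1] by (simp add: monom_0)
  also have "\<dots> = 1\<^sub>m n" by (rule eq_matI, auto)
  finally show ?case using A by simp
next
  case (Suc k)
  have "monom (1::'a) (Suc k) = pCons 0 (monom 1 k)" by (simp add: monom_Suc)
  hence "mpoly n (monom 1 (Suc k)) A = A * A ^\<^sub>m k"
    using mpoly_pCons0[OF A] Suc by simp
  also have "\<dots> = A ^\<^sub>m (Suc k)" using A
    by (simp add: pow_mat_comm)
  finally show ?case .
qed

lemma mpoly_det_root:
  fixes A :: "'a :: alg_closed_field mat"
  assumes A: "A \<in> carrier_mat n n" and p: "p \<noteq> 0" and d: "det (mpoly n p A) = 0"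
  shows "\<exists>c. poly p c = 0 \<and> eigenvalue A c"
  using p d
proof (induct "degree p" arbitrary: p rule: less_induct)
  case (less p)
  show ?case
  proof (cases "degree p = 0")
    case True
    then obtain a where pa: "p = [:a:]" by (metis degree_eq_zeroE)
    with less have a: "a \<noteq> 0" by auto
    have "det (mpoly n p A) = a ^ n" unfolding pa mpoly_const[OF A] by simp
    with a less show ?thesis by simp
  next
    case False
    then obtain c where c: "poly p c = 0" using alg_closed_imp_poly_has_root by blast
    hence "[:-c, 1:] dvd p" using poly_eq_0_iff_dvd by blast
    then obtain q where pq: "p = [:-c, 1:] * q" by (elim dvdE)
    have q: "q \<noteq> 0" using less.prems pq by auto
    have deg: "degree p = Suc (degree q)" unfolding pq using q by (subst degree_mult_eq) auto
    have "det (mpoly n p A) = det (char_matrix A c) * det (mpoly n q A)"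
      unfolding pq mpoly_lin[OF A] by (rule det_mult[of _ n], insert A, auto)
    with less.prems have "det (char_matrix A c) = 0 \<or> det (mpoly n q A) = 0" by simp
    thus ?thesis
    proof
      assume "det (char_matrix A c) = 0"
      hence "eigenvalue A c" using eigenvalue_det[OF A] by simp
      with c show ?thesis by blast
    next
      assume "det (mpoly n q A) = 0"
      from less.hyps[OF _ q this] deg obtain c' where "poly q c' = 0" "eigenvalue A c'" by auto
      thus ?thesis unfolding pq by auto
    qed
  qed
qed

lemma eigenvalue_pow_root:
  fixes A :: "'a :: alg_closed_field mat"
  assumes A: "A \<in> carrier_mat n n" and ev: "eigenvalue (A ^\<^sub>m k) \<alpha>"
  shows "\<exists>c. eigenvalue A c \<and> c ^ k = \<alpha>"
proof (cases "k = 0")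
  case True
  have n: "n > 0" using eigenvalue_imp_nonzero_dim[OF _ ev] A by auto
  have "det (char_matrix (1\<^sub>m n) \<alpha>) = 0" using ev True A eigenvalue_det[of "1\<^sub>m n" n \<alpha>] by simp
  also have "char_matrix (1\<^sub>m n) \<alpha> = (1 - \<alpha>) \<cdot>\<^sub>m 1\<^sub>m n"
    unfolding char_matrix_def by (rule eq_matI, auto)
  finally have "(1 - \<alpha>) ^ n = 0" by simp
  hence a1: "\<alpha> = 1" by simp
  have "degree (char_poly A) = n" using degree_monic_char_poly[OF A] by auto
  then obtain c where "poly (char_poly A) c = 0" using alg_closed_imp_poly_has_root n by force
  hence "eigenvalue A c" using eigenvalue_root_char_poly[OF A] by simp
  thus ?thesis using True a1 by auto
next
  case False
  define p where "p = monom 1 k - [:\<alpha>:]"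
  have "coeff p k = 1" using False unfolding p_def by (simp add: coeff_pCons split: nat.split)
  hence p0: "p \<noteq> 0" by auto
  have "mpoly n p A = A ^\<^sub>m k + (-\<alpha>) \<cdot>\<^sub>m 1\<^sub>m n"
    unfolding p_def diff_conv_add_uminus using mpoly_add[OF A] mpoly_monom[OF A] mpoly_const[OF A]
    by simp
  also have "\<dots> = char_matrix (A ^\<^sub>m k) \<alpha>" unfolding char_matrix_def using A by simp
  finally have "det (mpoly n p A) = 0" using eigenvalue_det[of "A ^\<^sub>m k" n \<alpha>] ev A by simp
  from mpoly_det_root[OF A p0 this] obtain c where "poly p c = 0" "eigenvalue A c" by auto
  thus ?thesis unfolding p_def by (auto simp: poly_monom)
qed

lemma syl_drop_q:
  fixes p q :: "'a :: comm_ring_1 poly"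
  assumes q: "coeff q n = 0" and n: "n > 0"
  shows "det (sylvester_mat_sub m n p q) = coeff p m * det (sylvester_mat_sub m (n-1) p q)"
proof -
  let ?S = "sylvester_mat_sub m n p q"
  have S: "?S \<in> carrier_mat (m+n) (m+n)" by auto
  have "det ?S = (\<Sum>i<m+n. ?S $$ (i,0) * cofactor ?S i 0)"
    by (rule laplace_expansion_column[OF S], insert n, auto)
  also have "\<dots> = (\<Sum>i\<in>{0}. ?S $$ (i,0) * cofactor ?S i 0)"
  proof (rule sum.mono_neutral_right)
    show "\<forall>i\<in>{..<m + n} - {0}. ?S $$ (i, 0) * cofactor ?S i 0 = 0"
    proof
      fix i assume i: "i \<in> {..<m + n} - {0}"
      have "?S $$ (i, 0) = 0" using i q n by (subst sylvester_mat_sub_index, auto)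
      thus "?S $$ (i, 0) * cofactor ?S i 0 = 0" by simp
    qed
  qed (insert n, auto)
  also have "\<dots> = coeff p m * det (mat_delete ?S 0 0)"
    using n by (simp add: sylvester_mat_sub_index cofactor_def)
  also have "mat_delete ?S 0 0 = sylvester_mat_sub m (n-1) p q"
  proof (rule eq_matI)
    fix i j assume ij: "i < dim_row (sylvester_mat_sub m (n-1) p q)" "j < dim_col (sylvester_mat_sub m (n-1) p q)"
    hence ij': "i < m + (n-1)" "j < m + (n-1)" by auto
    show "mat_delete ?S 0 0 $$ (i, j) = sylvester_mat_sub m (n-1) p q $$ (i, j)"
    proof -
      have qq: "\<And>k. k = n \<Longrightarrow> coeff q k = 0" using q by simp
      show ?thesis unfolding mat_delete_def using ij' n q
        apply (auto simp: sylvester_mat_sub_def)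
        apply (subgoal_tac "i - j = n", simp, arith)
        done
    qed
  qed (insert n, auto)
  finally show ?thesis .
qed

lemma syl_drop_p:
  fixes p q :: "'a :: comm_ring_1 poly"
  assumes p: "coeff p m = 0" and m: "m > 0"
  shows "det (sylvester_mat_sub m n p q) = (-1)^n * coeff q n * det (sylvester_mat_sub (m-1) n p q)"
proof -
  let ?S = "sylvester_mat_sub m n p q"
  have S: "?S \<in> carrier_mat (m+n) (m+n)" by auto
  have "det ?S = (\<Sum>i<m+n. ?S $$ (i,0) * cofactor ?S i 0)"
    by (rule laplace_expansion_column[OF S], insert m, auto)
  also have "\<dots> = (\<Sum>i\<in>{n}. ?S $$ (i,0) * cofactor ?S i 0)"
  proof (rule sum.mono_neutral_right)
    show "\<forall>i\<in>{..<m + n} - {n}. ?S $$ (i, 0) * cofactor ?S i 0 = 0"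
    proof
      fix i assume i: "i \<in> {..<m + n} - {n}"
      have "?S $$ (i, 0) = 0" using i p m by (subst sylvester_mat_sub_index, auto)
      thus "?S $$ (i, 0) * cofactor ?S i 0 = 0" by simp
    qed
  qed (insert m, auto)
  also have "\<dots> = coeff q n * ((-1)^n * det (mat_delete ?S n 0))"
    using m by (simp add: sylvester_mat_sub_index cofactor_def)
  also have "mat_delete ?S n 0 = sylvester_mat_sub (m-1) n p q"
  proof (rule eq_matI)
    fix i j assume ij: "i < dim_row (sylvester_mat_sub (m-1) n p q)" "j < dim_col (sylvester_mat_sub (m-1) n p q)"
    hence ij': "i < (m-1) + n" "j < (m-1) + n" by auto
    show "mat_delete ?S n 0 $$ (i, j) = sylvester_mat_sub (m-1) n p q $$ (i, j)"
    proof -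
      have pp: "\<And>k. k = m \<Longrightarrow> coeff p k = 0" using p by simp
      show ?thesis unfolding mat_delete_def using ij' m p
        apply (auto simp: sylvester_mat_sub_def)
        apply (subgoal_tac "m + i - Suc j = m", simp, arith)
        done
    qed
  qed (insert m, auto)
  finally show ?thesis by simp
qed

lemma syl_drop_q_iter:
  fixes p q :: "'a :: comm_ring_1 poly"
  shows "degree q \<le> n \<Longrightarrow> det (sylvester_mat_sub (degree p) n p q) = lead_coeff p ^ (n - degree q) * resultant p q"
proof (induct "n - degree q" arbitrary: n)
  case 0
  hence "n = degree q" by auto
  thus ?case by (simp add: resultant_def sylvester_mat_def)
next
  case (Suc k)
  hence n: "n > 0" "coeff q n = 0" "degree q \<le> n - 1" "k = (n-1) - degree q" by (auto simp: coeff_eq_0)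
  have "det (sylvester_mat_sub (degree p) n p q) = lead_coeff p * det (sylvester_mat_sub (degree p) (n-1) p q)"
    by (rule syl_drop_q[OF n(2,1)])
  also have "\<dots> = lead_coeff p * (lead_coeff p ^ (n - 1 - degree q) * resultant p q)"
    using Suc(1)[OF n(4) n(3)] by simp
  also have "\<dots> = lead_coeff p ^ (n - degree q) * resultant p q"
    using Suc(2) n by (cases "n - degree q", auto)
  finally show ?case .
qed

lemma syl_drop_p_iter:
  fixes p q :: "'a :: comm_ring_1 poly"
  shows "degree p \<le> m \<Longrightarrow> det (sylvester_mat_sub m (degree q) p q) = ((-1)^degree q * lead_coeff q) ^ (m - degree p) * resultant p q"
proof (induct "m - degree p" arbitrary: m)
  case 0
  hence "m = degree p" by auto
  thus ?case by (simp add: resultant_def sylvester_mat_def)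
next
  case (Suc k)
  hence m: "m > 0" "coeff p m = 0" "degree p \<le> m - 1" "k = (m-1) - degree p" by (auto simp: coeff_eq_0)
  have "det (sylvester_mat_sub m (degree q) p q) = (-1)^degree q * lead_coeff q * det (sylvester_mat_sub (m-1) (degree q) p q)"
    by (rule syl_drop_p[OF m(2,1)])
  also have "\<dots> = (-1)^degree q * lead_coeff q * (((-1)^degree q * lead_coeff q) ^ (m - 1 - degree p) * resultant p q)"
    using Suc(1)[OF m(4) m(3)] by simp
  also have "\<dots> = ((-1)^degree q * lead_coeff q) ^ (m - degree p) * resultant p q"
    using Suc(2) m by (cases "m - degree p", auto)
  finally show ?case .
qed

lemma hom_resultant_sub:
  assumes h: "comm_ring_hom h"
  shows "h (resultant p q) = det (sylvester_mat_sub (degree p) (degree q) (map_poly h p) (map_poly h q))"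
proof -
  interpret comm_ring_hom h by fact
  show ?thesis unfolding resultant_def sylvester_mat_def hom_det[symmetric]
    by (subst sylvester_mat_sub_map, auto)
qed

lemma resultant_hom_zero1:
  fixes h :: "'a :: comm_ring_1 \<Rightarrow> 'b :: idom"
  assumes h: "comm_ring_hom h"
    and d: "degree (map_poly h p) = degree p" and p0: "map_poly h p \<noteq> 0"
    and r: "h (resultant p q) = 0"
  shows "resultant (map_poly h p) (map_poly h q) = 0"
proof -
  have "0 = det (sylvester_mat_sub (degree (map_poly h p)) (degree q) (map_poly h p) (map_poly h q))"
    using r hom_resultant_sub[OF h, of p q] d by simp
  also have "\<dots> = lead_coeff (map_poly h p) ^ (degree q - degree (map_poly h q)) * resultant (map_poly h p) (map_poly h q)"
    by (rule syl_drop_q_iter, rule degree_map_poly_le)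
  finally show ?thesis using p0 by simp
qed

lemma resultant_hom_zero2:
  fixes h :: "'a :: comm_ring_1 \<Rightarrow> 'b :: idom"
  assumes h: "comm_ring_hom h"
    and d: "degree (map_poly h q) = degree q" and q0: "map_poly h q \<noteq> 0"
    and r: "h (resultant p q) = 0"
  shows "resultant (map_poly h p) (map_poly h q) = 0"
proof -
  have "0 = det (sylvester_mat_sub (degree p) (degree (map_poly h q)) (map_poly h p) (map_poly h q))"
    using r hom_resultant_sub[OF h, of p q] d by simp
  also have "\<dots> = ((-1)^degree (map_poly h q) * lead_coeff (map_poly h q)) ^ (degree p - degree (map_poly h p)) * resultant (map_poly h p) (map_poly h q)"
    by (rule syl_drop_p_iter, rule degree_map_poly_le)
  finally show ?thesis using q0 by simp
qed

definition CI :: "nat \<Rightarrow> complex poly poly \<Rightarrow> complex poly mat \<Rightarrow> complex poly poly poly" where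
  "CI n y M = det ([:y:] \<cdot>\<^sub>m 1\<^sub>m n - map_mat lift_x M)"

definition ev2 :: "complex \<Rightarrow> complex \<Rightarrow> complex poly poly \<Rightarrow> complex" where
  "ev2 a b p = poly (map_poly (\<lambda>c. poly c b) p) a"

definition matat :: "complex poly mat \<Rightarrow> complex \<Rightarrow> complex mat" where
  "matat M x0 = map_mat (\<lambda>p. poly p x0) M"

lemma ev2_hom: "comm_ring_hom (ev2 a b)"
proof -
  interpret m: map_poly_comm_ring_hom "\<lambda>c. poly c b" ..
  show ?thesis unfolding ev2_def
    by (unfold_locales, auto simp: m.hom_add m.hom_mult)
qed

lemma map_poly_const1: "f 0 = 0 \<Longrightarrow> map_poly f [:x:] = [:f x:]"
  by (cases "x = 0") (auto simp: map_poly_def)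

lemma ev2_simps[simp]: "ev2 a b Y1 = a" "ev2 a b Y2 = b" "ev2 a b [:[:c:]:] = c"
  unfolding ev2_def Y1_def Y2_def by (auto simp: map_poly_pCons map_poly_const1)

lemma ev2_lift: "map_poly (ev2 a b) (lift_x m) = m"
  unfolding lift_x_def
  by (subst map_poly_map_poly, simp add: ev2_def, rule map_poly_idI, simp)

lemma ev_CI1: assumes M: "M \<in> carrier_mat n n"
  shows "map_poly (ev2 a b) (CI n Y1 M) = det ([:a:] \<cdot>\<^sub>m 1\<^sub>m n - M)"
proof -
  interpret e: comm_ring_hom "ev2 a b" by (rule ev2_hom)
  interpret m: map_poly_comm_ring_hom "ev2 a b" ..
  show ?thesis unfolding CI_def m.hom_det[symmetric]
    by (rule arg_cong[of _ _ det], rule eq_matI, insert M,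
        auto simp: ev2_lift hom_distribs)
qed

lemma ev_CI2: assumes M: "M \<in> carrier_mat n n"
  shows "map_poly (ev2 a b) (CI n Y2 M) = det ([:b:] \<cdot>\<^sub>m 1\<^sub>m n - M)"
proof -
  interpret e: comm_ring_hom "ev2 a b" by (rule ev2_hom)
  interpret m: map_poly_comm_ring_hom "ev2 a b" ..
  show ?thesis unfolding CI_def m.hom_det[symmetric]
    by (rule arg_cong[of _ _ det], rule eq_matI, insert M,
        auto simp: ev2_lift hom_distribs)
qed

lemma matat_carrier[simp]: "M \<in> carrier_mat n n \<Longrightarrow> matat M x0 \<in> carrier_mat n n"
  unfolding matat_def by simp

lemma charpoly_eval: assumes M: "M \<in> carrier_mat n n"
  shows "poly (det ([:a:] \<cdot>\<^sub>m 1\<^sub>m n - M)) x0 = poly (char_poly (matat M x0)) a"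
proof -
  have "poly (det ([:a:] \<cdot>\<^sub>m 1\<^sub>m n - M)) x0 = det (map_mat (\<lambda>p. poly p x0) ([:a:] \<cdot>\<^sub>m 1\<^sub>m n - M))"
    by (rule comm_ring_hom.hom_det[OF poly_hom.comm_ring_hom_axioms, symmetric])
  also have "\<dots> = det (map_mat (\<lambda>p. poly p a) (char_poly_matrix (matat M x0)))"
    by (rule arg_cong[of _ _ det], rule eq_matI, insert M,
        auto simp: char_poly_matrix_def matat_def)
  also have "\<dots> = poly (char_poly (matat M x0)) a"
    unfolding char_poly_def by (rule comm_ring_hom.hom_det[OF poly_hom.comm_ring_hom_axioms])
  finally show ?thesis .
qed

lemma eigen_at_iff: assumes M: "M \<in> carrier_mat n n"
  shows "eigenvalue (matat M x0) a \<longleftrightarrow> poly (det ([:a:] \<cdot>\<^sub>m 1\<^sub>m n - M)) x0 = 0"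
  unfolding charpoly_eval[OF M] by (rule eigenvalue_root_char_poly[of _ n], insert M, simp)

lemma char_poly_nz: assumes M: "(N :: 'a :: field mat) \<in> carrier_mat n n"
  shows "char_poly N \<noteq> 0"
  using degree_monic_char_poly[OF M] by auto

lemma finite_eigen: assumes M: "(N :: 'a :: field mat) \<in> carrier_mat n n"
  shows "finite {a. eigenvalue N a}"
  using poly_roots_finite[OF char_poly_nz[OF M]] eigenvalue_root_char_poly[OF M] by simp

lemma ev2_all_zero: assumes "\<And>a b. ev2 a b L = 0" shows "L = 0"
proof -
  have "\<And>b. map_poly (\<lambda>c. poly c b) L = 0"
    using assms unfolding ev2_def using poly_all_0_iff_0 by blast
  hence "\<And>b k. poly (coeff L k) b = 0"
    by (metis coeff_map_poly coeff_0 poly_0)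
  hence "\<And>k. coeff L k = 0" using poly_all_0_iff_0 by blast
  thus ?thesis using poly_eqI by (metis coeff_0)
qed

definition bad1 :: "complex poly mat \<Rightarrow> nat \<Rightarrow> complex set" where
  "bad1 M n = {a. degree (det ([:a:] \<cdot>\<^sub>m 1\<^sub>m n - M)) \<noteq> degree (CI n Y1 M) \<or> det ([:a:] \<cdot>\<^sub>m 1\<^sub>m n - M) = 0}"

definition bad2 :: "complex poly mat \<Rightarrow> nat \<Rightarrow> complex set" where
  "bad2 M n = {b. degree (det ([:b:] \<cdot>\<^sub>m 1\<^sub>m n - M)) \<noteq> degree (CI n Y2 M) \<or> det ([:b:] \<cdot>\<^sub>m 1\<^sub>m n - M) = 0}"

lemma zero_set_finite: fixes M :: "complex poly mat" assumes M: "M \<in> carrier_mat n n"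
  shows "finite {a. det ([:a:] \<cdot>\<^sub>m 1\<^sub>m n - M) = 0}"
proof (rule finite_subset[OF _ finite_eigen[OF matat_carrier[OF M, of 0]]])
  show "{a. det ([:a:] \<cdot>\<^sub>m 1\<^sub>m n - M) = 0} \<subseteq> {a. eigenvalue (matat M 0) a}"
    using eigen_at_iff[OF M] by auto
qed

lemma CI1_nz: fixes M :: "complex poly mat" assumes M: "M \<in> carrier_mat n n" shows "CI n Y1 M \<noteq> 0"
proof
  assume "CI n Y1 M = 0"
  hence "\<And>a. det ([:a:] \<cdot>\<^sub>m 1\<^sub>m n - M) = 0" using ev_CI1[OF M, of _ 0, symmetric] by simp
  hence "{a. det ([:a:] \<cdot>\<^sub>m 1\<^sub>m n - M) = 0} = UNIV" by auto
  with zero_set_finite[OF M] infinite_UNIV_char_0[where 'a=complex] show False by simp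
qed

lemma CI2_nz: fixes M :: "complex poly mat" assumes M: "M \<in> carrier_mat n n" shows "CI n Y2 M \<noteq> 0"
proof
  assume "CI n Y2 M = 0"
  hence "\<And>b. det ([:b:] \<cdot>\<^sub>m 1\<^sub>m n - M) = 0" using ev_CI2[OF M, of 0, symmetric] by simp
  hence "{a. det ([:a:] \<cdot>\<^sub>m 1\<^sub>m n - M) = 0} = UNIV" by auto
  with zero_set_finite[OF M] infinite_UNIV_char_0[where 'a=complex] show False by simp
qed

lemma ev2_swap: "ev2 a b L = poly (poly L [:a:]) b"
  unfolding ev2_def by (induct L) (auto simp: map_poly_pCons)

lemma bad1_finite: assumes M: "M \<in> carrier_mat n n" shows "finite (bad1 M n)"
proof -
  let ?A = "CI n Y1 M"
  define d where "d = degree ?A"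
  define L where "L = lead_coeff ?A"
  have L0: "L \<noteq> 0" unfolding L_def using CI1_nz[OF M] by simp
  then obtain a0 b0 where ab0: "ev2 a0 b0 L \<noteq> 0" using ev2_all_zero by blast
  define P where "P = map_poly (\<lambda>c. poly c b0) L"
  have P0: "P \<noteq> 0" using ab0 unfolding P_def ev2_def by auto
  interpret e: comm_ring_hom "ev2 a b0" for a by (rule ev2_hom)
  have co: "coeff (det ([:a:] \<cdot>\<^sub>m 1\<^sub>m n - M)) d = poly P a" for a
    unfolding ev_CI1[OF M, of a b0, symmetric] d_def L_def P_def
    by (simp add: ev2_def)
  have "bad1 M n \<subseteq> {a. poly P a = 0} \<union> {a. det ([:a:] \<cdot>\<^sub>m 1\<^sub>m n - M) = 0}"
  proof
    fix a assume "a \<in> bad1 M n"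
    moreover have "degree (det ([:a:] \<cdot>\<^sub>m 1\<^sub>m n - M)) \<le> d"
      unfolding ev_CI1[OF M, of a b0, symmetric] d_def by (rule degree_map_poly_le)
    ultimately show "a \<in> {a. poly P a = 0} \<union> {a. det ([:a:] \<cdot>\<^sub>m 1\<^sub>m n - M) = 0}"
      unfolding bad1_def using co[of a] le_degree[of "det ([:a:] \<cdot>\<^sub>m 1\<^sub>m n - M)" d] d_def by force
  qed
  thus ?thesis by (rule finite_subset, insert poly_roots_finite[OF P0] zero_set_finite[OF M], auto)
qed

lemma bad2_finite: assumes M: "M \<in> carrier_mat n n" shows "finite (bad2 M n)"
proof -
  let ?A = "CI n Y2 M"
  define d where "d = degree ?A"
  define L where "L = lead_coeff ?A"
  have L0: "L \<noteq> 0" unfolding L_def using CI2_nz[OF M] by simp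
  then obtain a0 b0 where ab0: "ev2 a0 b0 L \<noteq> 0" using ev2_all_zero by blast
  define P where "P = poly L [:a0:]"
  have P0: "P \<noteq> 0" using ab0 unfolding P_def ev2_swap by auto
  have co: "coeff (det ([:b:] \<cdot>\<^sub>m 1\<^sub>m n - M)) d = poly P b" for b
    unfolding ev_CI2[OF M, of a0 b, symmetric] d_def L_def P_def
    by (subst coeff_map_poly, simp add: ev2_def, simp add: ev2_swap)
  have "bad2 M n \<subseteq> {a. poly P a = 0} \<union> {a. det ([:a:] \<cdot>\<^sub>m 1\<^sub>m n - M) = 0}"
  proof
    fix b assume "b \<in> bad2 M n"
    moreover have "degree (det ([:b:] \<cdot>\<^sub>m 1\<^sub>m n - M)) \<le> d"
      unfolding ev_CI2[OF M, of a0 b, symmetric] d_def by (rule degree_map_poly_le)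
    ultimately show "b \<in> {a. poly P a = 0} \<union> {a. det ([:a:] \<cdot>\<^sub>m 1\<^sub>m n - M) = 0}"
      unfolding bad2_def using co[of b] le_degree[of "det ([:b:] \<cdot>\<^sub>m 1\<^sub>m n - M)" d] d_def by force
  qed
  thus ?thesis by (rule finite_subset, insert poly_roots_finite[OF P0] zero_set_finite[OF M], auto)
qed

lemma stepA:
  assumes M1: "M1 \<in> carrier_mat n1 n1" and M2: "M2 \<in> carrier_mat n2 n2"
    and S: "S dvd resultant (CI n1 Y1 M1) (CI n2 Y2 M2)"
    and ab: "ev2 a b S = 0"
    and nb: "a \<notin> bad1 M1 n1 \<or> b \<notin> bad2 M2 n2"
  shows "\<exists>x0. eigenvalue (matat M1 x0) a \<and> eigenvalue (matat M2 x0) b"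
proof -
  let ?A = "CI n1 Y1 M1" and ?B = "CI n2 Y2 M2"
  let ?pa = "det ([:a:] \<cdot>\<^sub>m 1\<^sub>m n1 - M1)" and ?qb = "det ([:b:] \<cdot>\<^sub>m 1\<^sub>m n2 - M2)"
  interpret e: comm_ring_hom "ev2 a b" by (rule ev2_hom)
  from S obtain k where Rk: "resultant ?A ?B = S * k" by (elim dvdE)
  have R0: "ev2 a b (resultant ?A ?B) = 0" unfolding Rk e.hom_mult ab by simp
  have mA: "map_poly (ev2 a b) ?A = ?pa" by (rule ev_CI1[OF M1])
  have mB: "map_poly (ev2 a b) ?B = ?qb" by (rule ev_CI2[OF M2])
  have "resultant ?pa ?qb = 0"
    using nb
  proof
    assume "a \<notin> bad1 M1 n1"
    hence "degree (map_poly (ev2 a b) ?A) = degree ?A" "map_poly (ev2 a b) ?A \<noteq> 0"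
      unfolding mA bad1_def by auto
    from resultant_hom_zero1[OF ev2_hom this R0] show ?thesis unfolding mA mB .
  next
    assume "b \<notin> bad2 M2 n2"
    hence "degree (map_poly (ev2 a b) ?B) = degree ?B" "map_poly (ev2 a b) ?B \<noteq> 0"
      unfolding mB bad2_def by auto
    from resultant_hom_zero2[OF ev2_hom this R0] show ?thesis unfolding mA mB .
  qed
  hence "degree (gcd ?pa ?qb) \<noteq> 0" using resultant_0_gcd by blast
  then obtain x0 where x0: "poly (gcd ?pa ?qb) x0 = 0" using alg_closed_imp_poly_has_root by blast
  from gcd_dvd1[of ?pa ?qb] obtain k1 where k1: "?pa = gcd ?pa ?qb * k1" by (elim dvdE)
  from gcd_dvd2[of ?pa ?qb] obtain k2 where k2: "?qb = gcd ?pa ?qb * k2" by (elim dvdE)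
  have "poly ?pa x0 = poly (gcd ?pa ?qb * k1) x0" using k1 by (rule arg_cong)
  hence "poly ?pa x0 = 0" using x0 by simp
  moreover have "poly ?qb x0 = poly (gcd ?pa ?qb * k2) x0" using k2 by (rule arg_cong)
  hence "poly ?qb x0 = 0" using x0 by simp
  ultimately show ?thesis using eigen_at_iff[OF M1] eigen_at_iff[OF M2] by blast
qed

lemma map_poly_reflect:
  assumes h: "comm_ring_hom h" and l: "h (lead_coeff p) \<noteq> 0"
  shows "map_poly h (reflect_poly p) = reflect_poly (map_poly h p)"
proof -
  interpret comm_ring_hom h by fact
  have d: "degree (map_poly h p) = degree p"
    by (rule degree_map_poly, insert l, auto)
  show ?thesis
    by (rule poly_eqI, simp add: coeff_reflect_poly d coeff_map_poly)
qed

definition Qpoly :: "bool \<Rightarrow> complex \<Rightarrow> complex poly poly \<Rightarrow> complex poly poly" where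
  "Qpoly t \<rho> P = (if t then reflect_poly P else P) \<circ>\<^sub>p [:0, [:inverse \<rho>:]:]"

lemma Qpoly_nz: assumes "P \<noteq> 0" "\<rho> \<noteq> 0" shows "Qpoly t \<rho> P \<noteq> 0"
  unfolding Qpoly_def using assms by (subst pcompose_eq_0_iff, auto)

lemma Qroot:
  fixes h :: "complex poly \<Rightarrow> 'b :: field"
  assumes h: "comm_ring_hom h" and P: "lead_coeff P = 1" and g: "\<gamma> \<noteq> 0" and r: "\<rho> \<noteq> 0"
  shows "poly (map_poly h (Qpoly t \<rho> P)) \<gamma> = 0 \<longleftrightarrow>
    poly (map_poly h P) (if t then h [:\<rho>:] / \<gamma> else \<gamma> / h [:\<rho>:]) = 0"
proof -
  interpret comm_ring_hom h by fact
  define c where "c = h [:inverse \<rho>:]"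
  have "h [:\<rho>:] * c = h ([:\<rho>:] * [:inverse \<rho>:])" unfolding c_def by (rule hom_mult[symmetric])
  also have "[:\<rho>:] * [:inverse \<rho>:] = [:\<rho> * inverse \<rho>:]" by simp
  also have "\<rho> * inverse \<rho> = 1" using r by simp
  also have "[:1:] = (1 :: complex poly)" by (rule pCons_one)
  finally have hc: "h [:\<rho>:] * c = 1" by simp
  hence c0: "c \<noteq> 0" and hr0: "h [:\<rho>:] \<noteq> 0" by auto
  have ci: "c = inverse (h [:\<rho>:])" using hc by (metis inverse_unique mult.commute)
  have m: "map_poly h [:0, [:inverse \<rho>:]:] = [:0, c:]" unfolding c_def by (simp add: hom_distribs)
  have base: "poly (map_poly h (Qpoly t \<rho> P)) \<gamma> = poly (map_poly h (if t then reflect_poly P else P)) (c * \<gamma>)"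
    unfolding Qpoly_def map_poly_pcompose m poly_pcompose by (simp add: mult.commute)
  show ?thesis
  proof (cases t)
    case True
    have hl: "h (lead_coeff P) \<noteq> 0" using P by simp
    have cg: "c * \<gamma> \<noteq> 0" using c0 g by simp
    have "poly (map_poly h (Qpoly t \<rho> P)) \<gamma> = (c * \<gamma>) ^ degree (map_poly h P) * poly (map_poly h P) (inverse (c * \<gamma>))"
      unfolding base using True map_poly_reflect[OF h hl] poly_reflect_poly_nz[OF cg] by simp
    moreover have "inverse (c * \<gamma>) = h [:\<rho>:] / \<gamma>" unfolding ci using hr0 g by (simp add: field_simps)
    ultimately show ?thesis using True cg by simp
  next
    case False
    have "c * \<gamma> = \<gamma> / h [:\<rho>:]" unfolding ci by (simp add: field_simps)
    thus ?thesis unfolding base using False by simp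
  qed
qed

lemma strip_x:
  fixes p :: "'a :: idom poly"
  assumes p: "p \<noteq> 0"
  shows "\<exists>m q. p = [:0,1:]^m * q \<and> coeff q 0 \<noteq> 0"
proof -
  from order_decomp[OF p, of 0] obtain q where q: "p = [:- 0, 1:] ^ order 0 p * q" "\<not> [:- 0, 1:] dvd q" by blast
  have "poly q 0 \<noteq> 0" using q(2) poly_eq_0_iff_dvd by blast
  hence "coeff q 0 \<noteq> 0" by (simp add: poly_0_coeff_0)
  with q(1) show ?thesis by auto
qed

lemma crh_srh: "comm_ring_hom h \<Longrightarrow> semiring_hom h"
  by (simp add: comm_ring_hom_def Ring_Hom.ring_hom_def)

lemma eigen_pow_eigen:
  assumes A: "A \<in> carrier_mat n n" and e: "eigenvalue A a"
  shows "eigenvalue (A ^\<^sub>m i) (a ^ i)"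
proof -
  from e obtain v where v: "eigenvector A v a" unfolding eigenvalue_def by auto
  have "A ^\<^sub>m i *\<^sub>v v = a ^ i \<cdot>\<^sub>v v" by (rule eigenvector_pow[OF A v])
  with v A have "eigenvector (A ^\<^sub>m i) v (a ^ i)" unfolding eigenvector_def by auto
  thus ?thesis unfolding eigenvalue_def by auto
qed

lemma root_common_res:
  fixes p q :: "complex poly"
  assumes "poly p \<alpha> = 0" "poly q \<alpha> = 0" "p \<noteq> 0"
  shows "resultant p q = 0"
proof -
  have "[:-\<alpha>,1:] dvd p" "[:-\<alpha>,1:] dvd q" using assms poly_eq_0_iff_dvd by blast+
  hence d: "[:-\<alpha>,1:] dvd gcd p q" by simp
  have "gcd p q \<noteq> 0" using assms by simp
  from dvd_imp_degree_le[OF d this] have "degree (gcd p q) \<noteq> 0" by simp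
  thus ?thesis using resultant_0_gcd by blast
qed

lemma stepC:
  fixes M1 M2 :: "complex poly mat"
  assumes M1: "M1 \<in> carrier_mat n1 n1" and M2: "M2 \<in> carrier_mat n2 n2" and r: "\<rho> \<noteq> 0"
    and pA: "char_poly (M1 ^\<^sub>m i) = [:0,1:]^m * pA0" and l0: "lead_coeff pA0 = 1"
    and Qd: "poly (lead_coeff (Qpoly t \<rho> (char_poly (M2 ^\<^sub>m j)))) x0 \<noteq> 0"
    and ea: "eigenvalue (matat M1 x0) a" and eb: "eigenvalue (matat M2 x0) b"
    and a0: "a \<noteq> 0" and b0: "b \<noteq> 0"
    and rel: "if t then a^i * b^j = \<rho> else a^i = \<rho> * b^j"
  shows "poly (resultant pA0 (Qpoly t \<rho> (char_poly (M2 ^\<^sub>m j)))) x0 = 0"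
proof -
  let ?h = "\<lambda>p. poly p x0"
  let ?pB = "char_poly (M2 ^\<^sub>m j)"
  let ?Q = "Qpoly t \<rho> ?pB"
  have hh: "comm_ring_hom ?h" by (rule poly_hom.comm_ring_hom_axioms)
  interpret mh: map_poly_comm_ring_hom ?h by (unfold_locales, auto)
  note hpow = semiring_hom.mat_hom_pow[OF crh_srh[OF hh]]
  note hcp = comm_ring_hom.char_poly_hom[OF hh]
  have mm: "matat M x0 = map_mat ?h M" for M unfolding matat_def ..
  have cpA: "char_poly ((matat M1 x0) ^\<^sub>m i) = map_poly ?h (char_poly (M1 ^\<^sub>m i))"
    unfolding mm hpow[OF M1, symmetric] by (rule hcp, insert M1, auto)
  have cpB: "char_poly ((matat M2 x0) ^\<^sub>m j) = map_poly ?h ?pB"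
    unfolding mm hpow[OF M2, symmetric] by (rule hcp, insert M2, auto)
  have "eigenvalue ((matat M1 x0) ^\<^sub>m i) (a^i)" by (rule eigen_pow_eigen[of _ n1, OF _ ea], insert M1, auto)
  hence "poly (char_poly ((matat M1 x0) ^\<^sub>m i)) (a^i) = 0"
    using eigenvalue_root_char_poly[of "(matat M1 x0) ^\<^sub>m i" n1] M1 by auto
  hence "poly (map_poly ?h ([:0,1:]^m * pA0)) (a^i) = 0" unfolding cpA pA .
  moreover have "map_poly ?h ([:0,1:]^m * pA0) = [:0,1:]^m * map_poly ?h pA0"
    by (simp add: mh.hom_mult mh.hom_power map_poly_pCons)
  ultimately have "(a^i)^m * poly (map_poly ?h pA0) (a^i) = 0" by (simp add: poly_power)
  hence ra: "poly (map_poly ?h pA0) (a^i) = 0" using a0 by simp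
  have "eigenvalue ((matat M2 x0) ^\<^sub>m j) (b^j)" by (rule eigen_pow_eigen[of _ n2, OF _ eb], insert M2, auto)
  hence rb: "poly (map_poly ?h ?pB) (b^j) = 0" unfolding cpB[symmetric]
    using eigenvalue_root_char_poly[of "(matat M2 x0) ^\<^sub>m j" n2] M2 by auto
  have lB: "lead_coeff ?pB = 1" using degree_monic_char_poly[of "M2 ^\<^sub>m j" n2] M2 by auto
  have "(if t then ?h [:\<rho>:] / a^i else a^i / ?h [:\<rho>:]) = b^j"
    using rel a0 r by (cases t, auto simp: field_simps)
  hence "poly (map_poly ?h ?pB) (if t then ?h [:\<rho>:] / a^i else a^i / ?h [:\<rho>:]) = 0" using rb by simp
  hence rq: "poly (map_poly ?h ?Q) (a^i) = 0"
    using Qroot[OF poly_hom.comm_ring_hom_axioms lB _ r, where \<gamma>="a^i" and t=t] a0 by simp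
  have pA0nz: "map_poly ?h pA0 \<noteq> 0"
  proof
    assume "map_poly ?h pA0 = 0"
    hence "lead_coeff (map_poly ?h pA0) = 0" by simp
    moreover have "lead_coeff (map_poly ?h pA0) = 1"
      using l0 by (subst lead_coeff_map_poly_nz, auto)
    ultimately show False by simp
  qed
  have res0: "resultant (map_poly ?h pA0) (map_poly ?h ?Q) = 0"
    by (rule root_common_res[OF ra rq pA0nz])
  have "?pB \<noteq> 0" using lB by auto
  hence Q0: "?Q \<noteq> 0" using Qpoly_nz[OF _ r] by auto
  have d1: "degree (map_poly ?h pA0) = degree pA0" by (rule degree_map_poly, insert l0, auto)
  have d2: "degree (map_poly ?h ?Q) = degree ?Q" by (rule degree_map_poly, insert Qd Q0, auto)
  show ?thesis using comm_ring_hom.resultant_map_poly[OF hh d1 d2] res0 by simp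
qed

lemma stepD:
  fixes \<psi> :: "complex poly \<Rightarrow> 'k :: alg_closed_field" and M1 M2 :: "complex poly mat"
  assumes psi: "inj_comm_ring_hom \<psi>"
    and M1: "M1 \<in> carrier_mat n1 n1" and M2: "M2 \<in> carrier_mat n2 n2" and r: "\<rho> \<noteq> 0"
    and pA: "char_poly (M1 ^\<^sub>m i) = [:0,1:]^m * pA0" and c0: "coeff pA0 0 \<noteq> 0"
    and E0: "resultant pA0 (Qpoly t \<rho> (char_poly (M2 ^\<^sub>m j))) = 0"
  shows "\<exists>la mu. eigenvalue (map_mat \<psi> M1) la \<and> eigenvalue (map_mat \<psi> M2) mu \<and> (j > 0 \<longrightarrow> mu \<noteq> 0) \<and>
     (if t then la^i * mu^j = \<psi> [:\<rho>:] else la^i = \<psi> [:\<rho>:] * mu^j)"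
proof -
  interpret psi: inj_comm_ring_hom \<psi> by fact
  interpret mp: map_poly_inj_comm_ring_hom \<psi> ..
  have hh: "comm_ring_hom \<psi>" by (rule psi.comm_ring_hom_axioms)
  let ?pB = "char_poly (M2 ^\<^sub>m j)"
  let ?Q = "Qpoly t \<rho> ?pB"
  let ?g = "gcd pA0 ?Q"
  have "degree ?g \<noteq> 0" using E0 resultant_0_gcd by blast
  hence "degree (map_poly \<psi> ?g) > 0" by simp
  then obtain \<gamma> where g: "poly (map_poly \<psi> ?g) \<gamma> = 0" using alg_closed_imp_poly_has_root by blast
  have "map_poly \<psi> ?g dvd map_poly \<psi> pA0" by (rule mp.hom_dvd, simp)
  then obtain k1 where k1: "map_poly \<psi> pA0 = map_poly \<psi> ?g * k1" by (elim dvdE)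
  have "map_poly \<psi> ?g dvd map_poly \<psi> ?Q" by (rule mp.hom_dvd, simp)
  then obtain k2 where k2: "map_poly \<psi> ?Q = map_poly \<psi> ?g * k2" by (elim dvdE)
  have rA0: "poly (map_poly \<psi> pA0) \<gamma> = 0" unfolding k1 using g by simp
  have rQ: "poly (map_poly \<psi> ?Q) \<gamma> = 0" unfolding k2 using g by simp
  have "poly (map_poly \<psi> pA0) 0 = \<psi> (coeff pA0 0)" by (simp add: poly_0_coeff_0)
  hence g0: "\<gamma> \<noteq> 0" using rA0 c0 by auto
  have "map_poly \<psi> (char_poly (M1 ^\<^sub>m i)) = [:0,1:]^m * map_poly \<psi> pA0"
    unfolding pA by (simp add: mp.hom_mult mp.hom_power map_poly_pCons)
  hence "poly (map_poly \<psi> (char_poly (M1 ^\<^sub>m i))) \<gamma> = 0" using rA0 by (simp add: poly_power)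
  moreover have "map_poly \<psi> (char_poly (M1 ^\<^sub>m i)) = char_poly ((map_mat \<psi> M1) ^\<^sub>m i)"
    unfolding psi.mat_hom_pow[OF M1, symmetric] by (rule psi.char_poly_hom[symmetric], insert M1, auto)
  ultimately have "eigenvalue ((map_mat \<psi> M1) ^\<^sub>m i) \<gamma>"
    using eigenvalue_root_char_poly[of "(map_mat \<psi> M1) ^\<^sub>m i" n1] M1 by auto
  from eigenvalue_pow_root[OF _ this, of n1] M1 obtain la where l: "eigenvalue (map_mat \<psi> M1) la" "la^i = \<gamma>" by auto
  have lB: "lead_coeff ?pB = 1" using degree_monic_char_poly[of "M2 ^\<^sub>m j" n2] M2 by auto
  define \<beta> where "\<beta> = (if t then \<psi> [:\<rho>:] / \<gamma> else \<gamma> / \<psi> [:\<rho>:])"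
  have rB: "poly (map_poly \<psi> ?pB) \<beta> = 0" using Qroot[OF hh lB g0 r, where t=t] rQ unfolding \<beta>_def by simp
  moreover have "map_poly \<psi> ?pB = char_poly ((map_mat \<psi> M2) ^\<^sub>m j)"
    unfolding psi.mat_hom_pow[OF M2, symmetric] by (rule psi.char_poly_hom[symmetric], insert M2, auto)
  ultimately have "eigenvalue ((map_mat \<psi> M2) ^\<^sub>m j) \<beta>"
    using eigenvalue_root_char_poly[of "(map_mat \<psi> M2) ^\<^sub>m j" n2] M2 by auto
  from eigenvalue_pow_root[OF _ this, of n2] M2 obtain mu where m: "eigenvalue (map_mat \<psi> M2) mu" "mu^j = \<beta>" by auto
  have r0: "\<psi> [:\<rho>:] \<noteq> 0" using r by simp
  have b0: "\<beta> \<noteq> 0" using r0 g0 unfolding \<beta>_def by auto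
  have "j > 0 \<longrightarrow> mu \<noteq> 0" using m(2) b0 by auto
  moreover have "if t then la^i * mu^j = \<psi> [:\<rho>:] else la^i = \<psi> [:\<rho>:] * mu^j"
    using l(2) m(2) g0 r0 unfolding \<beta>_def by (cases t, auto simp: field_simps)
  ultimately show ?thesis using l(1) m(1) by blast
qed

lemma not_indep:
  fixes la mu r' :: "'k :: field"
  assumes N: "N > 0" and rN: "r' ^ N = 1" and ij: "(i, j) \<noteq> (0::nat, 0::nat)"
    and mu0: "j > 0 \<longrightarrow> mu \<noteq> 0"
    and rel: "if t then la^i * mu^j = r' else la^i = r' * mu^j"
  shows "\<not> mult_indep la mu"
proof (cases t)
  case True
  have e1: "la powi int (i*N) = la^(i*N)" "mu powi int (j*N) = mu^(j*N)" by (rule power_int_of_nat)+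
  have "la powi int (i*N) * mu powi int (j*N) = (la^i * mu^j)^N"
    unfolding e1 by (simp add: power_mult power_mult_distrib)
  also have "\<dots> = 1" using rel True rN by simp
  finally show ?thesis unfolding mult_indep_def using ij N by (intro notI, elim notE, intro exI[of _ "int (i*N)"] exI[of _ "int (j*N)"], auto)
next
  case False
  have e1: "la powi int (i*N) = la^(i*N)" "mu powi (- int (j*N)) = inverse (mu^(j*N))"
    by (rule power_int_of_nat, simp add: power_int_minus del: of_nat_mult)
  have "la^(i*N) * inverse (mu^(j*N)) = 1"
  proof (cases "j = 0")
    case True
    thus ?thesis using rel False rN by (simp add: power_mult)
  next
    case j: False
    hence m0: "mu \<noteq> 0" using mu0 by auto
    have "la^(i*N) * inverse (mu^(j*N)) = (r' * mu^j)^N * inverse ((mu^j)^N)"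
      using rel False by (simp add: power_mult)
    also have "\<dots> = 1" using rN m0 by (simp add: power_mult_distrib)
    finally show ?thesis .
  qed
  hence "la powi int (i*N) * mu powi (- int (j*N)) = 1" unfolding e1 .
  thus ?thesis unfolding mult_indep_def using ij N
    by (intro notI, elim notE, intro exI[of _ "int (i*N)"] exI[of _ "- int (j*N)"], auto)
qed

lemma inf_image_sub: assumes "f ` D \<subseteq> G" "inj_on f D" "infinite D" shows "infinite G"
proof
  assume "finite G"
  hence "finite (f ` D)" using assms(1) finite_subset by blast
  hence "finite D" using finite_imageD assms(2) by blast
  with assms(3) show False by blast
qed

lemma good_infinite:
  fixes \<rho> :: complex
  assumes B1: "finite B1" and B2: "finite B2" and r: "\<rho> \<noteq> 0" and ij: "(i, j) \<noteq> (0::nat, 0::nat)"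
  shows "infinite {(a,b). a \<noteq> 0 \<and> b \<noteq> 0 \<and> (if t then a^i * b^j = \<rho> else a^i = \<rho> * b^j) \<and> (a \<notin> B1 \<or> b \<notin> B2)}"
    (is "infinite ?G")
proof -
  have inf: "infinite (UNIV - B - {0::complex})" if "finite B" for B
    using that infinite_UNIV_char_0[where 'a=complex] by auto
  consider (both) "i > 0" "j > 0" | (i0) "i = 0" "j > 0" | (j0) "i > 0" "j = 0" using ij by auto
  thus ?thesis
  proof cases
    case both
    define c where "c a = (if t then \<rho> / a^i else a^i / \<rho>)" for a
    define f where "f a = (a, SOME b. b^j = c a)" for a :: complex
    have "f ` (UNIV - B1 - {0}) \<subseteq> ?G"
    proof
      fix x assume "x \<in> f ` (UNIV - B1 - {0})"
      then obtain a where a: "a \<notin> B1" "a \<noteq> 0" and x: "x = f a" by auto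
      have "\<exists>b. b^j = c a" using nth_root_exists both by blast
      hence b: "(SOME b. b^j = c a)^j = c a" by (rule someI_ex)
      have ca: "c a \<noteq> 0" using a r unfolding c_def by auto
      with b both have b0: "(SOME b. b^j = c a) \<noteq> 0" by (metis power_0_left less_numeral_extra(3))
      show "x \<in> ?G" unfolding x f_def using a b b0 r unfolding c_def by (cases t, auto simp: field_simps)
    qed
    moreover have "inj_on f (UNIV - B1 - {0})" unfolding f_def by (auto intro: inj_onI)
    ultimately show ?thesis using inf[OF B1] by (rule inf_image_sub)
  next
    case i0
    obtain b0 where b: "b0^j = (if t then \<rho> else inverse \<rho>)" using nth_root_exists i0 by blast
    hence b0: "b0 \<noteq> 0" using r i0 by (cases t, auto simp: power_0_left)
    have "(\<lambda>a. (a, b0)) ` (UNIV - B1 - {0}) \<subseteq> ?G" using b b0 r i0 by (cases t, auto)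
    moreover have "inj_on (\<lambda>a::complex. (a, b0)) (UNIV - B1 - {0})" by (auto intro: inj_onI)
    ultimately show ?thesis using inf[OF B1] by (rule inf_image_sub)
  next
    case j0
    obtain a0 where a: "a0^i = \<rho>" using nth_root_exists j0 by blast
    hence a0: "a0 \<noteq> 0" using r j0 by auto
    have "(\<lambda>b. (a0, b)) ` (UNIV - B2 - {0}) \<subseteq> ?G" using a a0 r j0 by (cases t, auto)
    moreover have "inj_on (\<lambda>b::complex. (a0, b)) (UNIV - B2 - {0})" by (auto intro: inj_onI)
    ultimately show ?thesis using inf[OF B2] by (rule inf_image_sub)
  qed
qed

lemma core_t:
  fixes M1 M2 :: "complex poly mat" and \<psi> :: "complex poly \<Rightarrow> 'k :: alg_closed_field"
  assumes psi: "inj_comm_ring_hom \<psi>"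
    and M1: "M1 \<in> carrier_mat n1 n1" and M2: "M2 \<in> carrier_mat n2 n2"
    and H: "\<forall>h1 h2. eigenvalue (map_mat \<psi> M1) h1 \<and> eigenvalue (map_mat \<psi> M2) h2 \<longrightarrow> mult_indep h1 h2"
    and ij: "(i, j) \<noteq> (0::nat, 0::nat)" and ru: "root_of_unity \<rho>"
  shows "\<not> (if t then Y1^i * Y2^j - [:[:\<rho>:]:] else Y1^i - [:[:\<rho>:]:] * Y2^j)
           dvd resultant (CI n1 Y1 M1) (CI n2 Y2 M2)"
proof
  let ?S = "if t then Y1^i * Y2^j - [:[:\<rho>:]:] else Y1^i - [:[:\<rho>:]:] * Y2^j"
  let ?rel = "\<lambda>a b. if t then a^i * b^j = \<rho> else a^i = \<rho> * b^j"
  assume Sd: "?S dvd resultant (CI n1 Y1 M1) (CI n2 Y2 M2)"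
  from ru obtain N where N: "N > 0" "\<rho>^N = 1" unfolding root_of_unity_def by auto
  have r0: "\<rho> \<noteq> 0" using N by (cases N, auto)
  have evS: "ev2 a b ?S = 0 \<longleftrightarrow> ?rel a b" for a b
  proof -
    interpret e: comm_ring_hom "ev2 a b" by (rule ev2_hom)
    have "ev2 a b ?S = (if t then a^i * b^j - \<rho> else a^i - \<rho> * b^j)"
      by (cases t) (simp_all only: if_True if_False e.hom_minus e.hom_mult e.hom_power ev2_simps)
    thus ?thesis by (cases t, auto)
  qed
  define G where "G = {(a,b). a \<noteq> 0 \<and> b \<noteq> 0 \<and> ?rel a b \<and> (a \<notin> bad1 M1 n1 \<or> b \<notin> bad2 M2 n2)}"
  have infG: "infinite G" unfolding G_def
    by (rule good_infinite[OF bad1_finite[OF M1] bad2_finite[OF M2] r0 ij])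
  define X where "X = {x0. \<exists>a b. (a,b) \<in> G \<and> eigenvalue (matat M1 x0) a \<and> eigenvalue (matat M2 x0) b}"
  have infX: "infinite X"
  proof
    assume fX: "finite X"
    have "G \<subseteq> (\<Union>x0\<in>X. {a. eigenvalue (matat M1 x0) a} \<times> {b. eigenvalue (matat M2 x0) b})"
    proof
      fix ab assume ab: "ab \<in> G"
      then obtain a b where abd: "ab = (a,b)" by force
      from ab have *: "ev2 a b ?S = 0" "a \<notin> bad1 M1 n1 \<or> b \<notin> bad2 M2 n2" unfolding abd G_def evS by auto
      from stepA[OF M1 M2 Sd *] obtain x0 where x0: "eigenvalue (matat M1 x0) a" "eigenvalue (matat M2 x0) b" by blast
      hence "x0 \<in> X" using ab unfolding X_def abd by blast
      thus "ab \<in> (\<Union>x0\<in>X. {a. eigenvalue (matat M1 x0) a} \<times> {b. eigenvalue (matat M2 x0) b})"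
        using x0 unfolding abd by blast
    qed
    moreover have "finite (\<Union>x0\<in>X. {a. eigenvalue (matat M1 x0) a} \<times> {b. eigenvalue (matat M2 x0) b})"
      by (rule finite_UN_I[OF fX], rule finite_cartesian_product,
          rule finite_eigen[OF matat_carrier[OF M1]], rule finite_eigen[OF matat_carrier[OF M2]])
    ultimately show False using infG finite_subset by blast
  qed
  have pAl: "lead_coeff (char_poly (M1 ^\<^sub>m i)) = 1" using degree_monic_char_poly[of "M1 ^\<^sub>m i" n1] M1 by auto
  hence "char_poly (M1 ^\<^sub>m i) \<noteq> 0" by auto
  from strip_x[OF this] obtain m pA0 where pA: "char_poly (M1 ^\<^sub>m i) = [:0,1:]^m * pA0"
    and c0: "coeff pA0 0 \<noteq> 0" by blast
  have l0: "lead_coeff pA0 = 1" using pAl unfolding pA by (simp add: lead_coeff_mult lead_coeff_power)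
  let ?pB = "char_poly (M2 ^\<^sub>m j)"
  let ?Q = "Qpoly t \<rho> ?pB"
  have "lead_coeff ?pB = 1" using degree_monic_char_poly[of "M2 ^\<^sub>m j" n2] M2 by auto
  hence "?pB \<noteq> 0" by auto
  hence Q0: "?Q \<noteq> 0" using Qpoly_nz[OF _ r0] by auto
  define Z3 where "Z3 = {x0. poly (lead_coeff ?Q) x0 = 0}"
  have fZ3: "finite Z3" unfolding Z3_def by (rule poly_roots_finite, insert Q0, simp)
  have sub: "X - Z3 \<subseteq> {x0. poly (resultant pA0 ?Q) x0 = 0}"
  proof
    fix x0 assume x0: "x0 \<in> X - Z3"
    then obtain a b where ab: "(a,b) \<in> G" "eigenvalue (matat M1 x0) a" "eigenvalue (matat M2 x0) b"
      unfolding X_def by blast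
    from ab(1) have "a \<noteq> 0" "b \<noteq> 0" "?rel a b" unfolding G_def by auto
    from stepC[OF M1 M2 r0 pA l0 _ ab(2,3) this] x0
    show "x0 \<in> {x0. poly (resultant pA0 ?Q) x0 = 0}" unfolding Z3_def by blast
  qed
  have E0: "resultant pA0 ?Q = 0"
  proof (rule ccontr)
    assume "resultant pA0 ?Q \<noteq> 0"
    from poly_roots_finite[OF this] sub have "finite (X - Z3)" using finite_subset by blast
    hence "finite X" using fZ3 by (metis Diff_infinite_finite)
    with infX show False by blast
  qed
  from stepD[OF psi M1 M2 r0 pA c0 E0] obtain la mu where
    lm: "eigenvalue (map_mat \<psi> M1) la \<and> eigenvalue (map_mat \<psi> M2) mu \<and> (j > 0 \<longrightarrow> mu \<noteq> 0) \<and>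
      (if t then la^i * mu^j = \<psi> [:\<rho>:] else la^i = \<psi> [:\<rho>:] * mu^j)" by (elim exE)
  note lm1 = lm[THEN conjunct1] and lm2 = lm[THEN conjunct2, THEN conjunct1]
    and lm3 = lm[THEN conjunct2, THEN conjunct2, THEN conjunct1]
    and lm4 = lm[THEN conjunct2, THEN conjunct2, THEN conjunct2]
  interpret psi: inj_comm_ring_hom \<psi> by fact
  have "\<psi> [:\<rho>:] ^ N = \<psi> ([:\<rho>:] ^ N)" by (rule psi.hom_power[symmetric])
  also have "[:\<rho>:] ^ N = [:\<rho> ^ N:]" by (rule poly_const_pow)
  also have "\<rho> ^ N = 1" by (rule N(2))
  finally have rN: "\<psi> [:\<rho>:] ^ N = 1" by (simp add: pCons_one)
  have "\<not> mult_indep la mu" by (rule not_indep[OF N(1) rN ij lm3 lm4])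
  moreover have "mult_indep la mu" using H lm1 lm2 by blast
  ultimately show False by contradiction
qed

lemma psi_hom:
  fixes \<phi> :: "complex poly fract \<Rightarrow> 'k :: field"
  assumes fe: "field_embedding \<phi>"
  shows "inj_comm_ring_hom (\<lambda>p. \<phi> (to_fract p))"
proof -
  from fe have inj: "inj \<phi>" and one: "\<phi> 1 = 1" and add: "\<And>a b. \<phi> (a + b) = \<phi> a + \<phi> b"
    and mult: "\<And>a b. \<phi> (a * b) = \<phi> a * \<phi> b" unfolding field_embedding_def by auto
  have "\<phi> 0 = \<phi> 0 + \<phi> 0" using add[of 0 0] by simp
  hence zero: "\<phi> 0 = 0" by (metis add_cancel_left_right)
  have injt: "\<And>x y. \<phi> (to_fract x) = \<phi> (to_fract y) \<Longrightarrow> x = y"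
    using injD[OF inj] to_fract_eq_iff by metis
  show ?thesis
    by (unfold_locales; auto simp: add mult one zero intro: injt)
qed

lemma eigen_1x1:
  fixes d :: "'a :: field"
  assumes "eigenvalue (mat 1 1 (\<lambda>_. d)) h"
  shows "h = d"
proof -
  have A: "mat 1 1 (\<lambda>_. d) \<in> carrier_mat 1 1" by simp
  have "det (char_matrix (mat 1 1 (\<lambda>_. d)) h) = 0" using eigenvalue_det[OF A] assms by simp
  moreover have "det (char_matrix (mat 1 1 (\<lambda>_. d)) h) = d - h"
    by (subst det_single, auto simp: char_matrix_def)
  ultimately show ?thesis by simp
qed

lemma CI_1x1: "CI 1 Y2 (mat 1 1 (\<lambda>_. D)) = [:Y2:] - lift_x D"
  unfolding CI_def by (subst det_single, auto)

theorem lemma2p1: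
  fixes r :: nat and Fs Gs :: "complex mat list"
    and \<phi> :: "complex poly fract \<Rightarrow> 'k :: alg_closed_field"
  assumes "r \<ge> 1" and "matpoly r Fs" and "matpoly r Gs"
    and "field_embedding \<phi>"
  shows "((\<forall>h1 h2. eigenvalue (xI_in \<phi> r Fs) h1 \<and> eigenvalue (xI_in \<phi> r Gs) h2
              \<longrightarrow> mult_indep h1 h2)
           \<longrightarrow> no_special_factor (R_fg r Fs Gs))
       \<and> ((\<forall>h1. eigenvalue (xI_in \<phi> r Fs) h1 \<longrightarrow> mult_indep h1 (det (xI_in \<phi> r Gs)))
           \<longrightarrow> no_special_factor (T_fg r Fs Gs))"
proof -
  define \<psi> where "\<psi> = (\<lambda>p. \<phi> (to_fract p))"
  have psi: "inj_comm_ring_hom \<psi>" unfolding \<psi>_def by (rule psi_hom[OF assms(4)])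
  interpret psi: inj_comm_ring_hom \<psi> by fact
  define M1 where "M1 = eval_xI r Fs"
  define M2 where "M2 = eval_xI r Gs"
  have M1: "M1 \<in> carrier_mat r r" unfolding M1_def eval_xI_def by simp
  have M2: "M2 \<in> carrier_mat r r" unfolding M2_def eval_xI_def by simp
  have x1: "xI_in \<phi> r Fs = map_mat \<psi> M1" unfolding xI_in_def M1_def \<psi>_def ..
  have x2: "xI_in \<phi> r Gs = map_mat \<psi> M2" unfolding xI_in_def M2_def \<psi>_def ..
  have c1: "char_in r Y1 Fs = CI r Y1 M1" unfolding char_in_def CI_def M1_def ..
  have c2: "char_in r Y2 Gs = CI r Y2 M2" unfolding char_in_def CI_def M2_def ..
  show ?thesis
  proof (intro conjI impI)
    assume H: "\<forall>h1 h2. eigenvalue (xI_in \<phi> r Fs) h1 \<and> eigenvalue (xI_in \<phi> r Gs) h2 \<longrightarrow> mult_indep h1 h2"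
    hence H': "\<forall>h1 h2. eigenvalue (map_mat \<psi> M1) h1 \<and> eigenvalue (map_mat \<psi> M2) h2 \<longrightarrow> mult_indep h1 h2"
      unfolding x1 x2 .
    show "no_special_factor (R_fg r Fs Gs)"
      unfolding no_special_factor_def R_fg_def c1 c2
    proof (intro allI impI conjI)
      fix i j :: nat and \<rho> assume a: "(i, j) \<noteq> (0, 0) \<and> root_of_unity \<rho>"
      show "\<not> (Y1 ^ i * Y2 ^ j - [:[:\<rho>:]:]) dvd resultant (CI r Y1 M1) (CI r Y2 M2)"
        using core_t[OF psi M1 M2 H', of i j \<rho> True] a by simp
      show "\<not> (Y1 ^ i - [:[:\<rho>:]:] * Y2 ^ j) dvd resultant (CI r Y1 M1) (CI r Y2 M2)"
        using core_t[OF psi M1 M2 H', of i j \<rho> False] a by simp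
    qed
  next
    assume H: "\<forall>h1. eigenvalue (xI_in \<phi> r Fs) h1 \<longrightarrow> mult_indep h1 (det (xI_in \<phi> r Gs))"
    define D where "D = det M2"
    define N2 where "N2 = mat 1 1 (\<lambda>_. D)"
    have N2: "N2 \<in> carrier_mat 1 1" unfolding N2_def by simp
    have mN2: "map_mat \<psi> N2 = mat 1 1 (\<lambda>_. \<psi> D)" unfolding N2_def by (rule eq_matI, auto)
    have dG: "det (xI_in \<phi> r Gs) = \<psi> D" unfolding x2 D_def by simp
    have H': "\<forall>h1 h2. eigenvalue (map_mat \<psi> M1) h1 \<and> eigenvalue (map_mat \<psi> N2) h2 \<longrightarrow> mult_indep h1 h2"
      using H eigen_1x1 unfolding x1 dG mN2 by blast
    have T: "T_fg r Fs Gs = resultant (CI r Y1 M1) (CI 1 Y2 N2)"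
      unfolding T_fg_def c1 N2_def CI_1x1 D_def M2_def ..
    show "no_special_factor (T_fg r Fs Gs)"
      unfolding no_special_factor_def T
    proof (intro allI impI conjI)
      fix i j :: nat and \<rho> assume a: "(i, j) \<noteq> (0, 0) \<and> root_of_unity \<rho>"
      show "\<not> (Y1 ^ i * Y2 ^ j - [:[:\<rho>:]:]) dvd resultant (CI r Y1 M1) (CI 1 Y2 N2)"
        using core_t[OF psi M1 N2 H', of i j \<rho> True] a by simp
      show "\<not> (Y1 ^ i - [:[:\<rho>:]:] * Y2 ^ j) dvd resultant (CI r Y1 M1) (CI 1 Y2 N2)"
        using core_t[OF psi M1 N2 H', of i j \<rho> False] a by simp
    qed
  qed
qed

end
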